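(* Let $n\ge2$, $t\in(0,1)$ and $A\in\mathcal K_0^n$, and set $\kappa_t(A)=\overline{\mathrm{conv}}\Big(\bigcup_{a\in A}\big[0,\tfrac{1}{1+t\|a\|}a\big]\cup t\mathbb B\Big)$. Then $\kappa_t(A)\subseteq \big(\psi_t(A^\circ)\big)^\circ$, where $\psi_t(K)=(K+t\mathbb B)\cap\frac{1-t}{t}\mathbb B$.
   Context: $\mathbb B$ is the closed Euclidean unit ball of $\mathbb R^n$, $[a,b]$ the segment between $a,b$, and $\overline{\mathrm{conv}}$ the closed convex hull. $\mathcal K_0^n$ is the family of closed convex subsets of $\mathbb R^n$ containing $0$. The polar set of $A\subseteq\mathbb R^n$ is $A^\circ=\{x\in\mathbb R^n:\sup_{a\in A}\langle a,x\rangle\le1\}$. *)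

theory Defs
  imports "HOL-Analysis.Analysis"
begin

definition polar :: "'a::real_inner set \<Rightarrow> 'a set" where
  "polar A = {x. \<forall>a\<in>A. inner a x \<le> 1}"

definition kappa :: "real \<Rightarrow> 'a::euclidean_space set \<Rightarrow> 'a set" where
  "kappa t A = closure (convex hull
      ((\<Union>a\<in>A. closed_segment 0 ((1 / (1 + t * norm a)) *\<^sub>R a)) \<union> cball 0 t))"

definition psi :: "real \<Rightarrow> 'a::euclidean_space set \<Rightarrow> 'a set" where
  "psi t K = {x + y | x y. x \<in> K \<and> y \<in> cball 0 t} \<inter> cball 0 ((1 - t) / t)"

end

theory Submission
  imports Defs
begin

lemma polar_closed: "closed (polar A)"
proof -
  have "polar A = (\<Inter>a\<in>A. {x. inner a x \<le> 1})" unfolding polar_def by auto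
  moreover have "closed {x. inner a x \<le> (1::real)}" for a :: 'a
    by (intro closed_Collect_le continuous_intros)
  ultimately show ?thesis by auto
qed

lemma polar_convex: "convex (polar A)"
proof -
  have "polar A = (\<Inter>a\<in>A. {x. inner a x \<le> 1})" unfolding polar_def by auto
  moreover have "convex {x. inner a x \<le> (1::real)}" for a :: 'a
    by (rule convex_halfspace_le)
  ultimately show ?thesis by (auto intro: convex_Inter)
qed

lemma polarI: "(\<And>a. a \<in> A \<Longrightarrow> inner a x \<le> 1) \<Longrightarrow> x \<in> polar A"
  unfolding polar_def by auto

theorem lemma4p2:
  fixes A :: "'a::euclidean_space set" and t :: real
  assumes "DIM('a) \<ge> 2"
    and "0 < t" and "t < 1"
    and "closed A" and "convex A" and "0 \<in> A"
  shows "kappa t A \<subseteq> polar (psi t (polar A))"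
proof -
  let ?P = "polar (psi t (polar A))"
  have gen: "(\<Union>a\<in>A. closed_segment 0 ((1 / (1 + t * norm a)) *\<^sub>R a)) \<union> cball 0 t \<subseteq> ?P"
  proof
    fix w assume w: "w \<in> (\<Union>a\<in>A. closed_segment 0 ((1 / (1 + t * norm a)) *\<^sub>R a)) \<union> cball 0 t"
    show "w \<in> ?P"
    proof (rule polarI)
      fix z assume "z \<in> psi t (polar A)"
      then obtain x y where z: "z = x + y" "x \<in> polar A" "norm y \<le> t"
        and zn: "norm z \<le> (1 - t) / t" unfolding psi_def by auto
      show "inner z w \<le> 1"
      proof (cases "w \<in> cball 0 t")
        case True
        have "inner z w \<le> norm z * norm w" by (rule norm_cauchy_schwarz)
        also have "\<dots> \<le> ((1 - t) / t) * t"
          using True zn assms(2,3) by (intro mult_mono) auto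
        also have "\<dots> = 1 - t" using assms by simp
        finally show ?thesis using assms by simp
      next
        case False
        then obtain a where a: "a \<in> A" and ws: "w \<in> closed_segment 0 ((1 / (1 + t * norm a)) *\<^sub>R a)"
          using w by auto
        then obtain s where s: "0 \<le> s" "s \<le> 1" and ws': "w = s *\<^sub>R ((1 / (1 + t * norm a)) *\<^sub>R a)"
          unfolding closed_segment_def by auto
        have pos: "1 + t * norm a > 0" using assms by (simp add: add_pos_nonneg)
        have "inner a x \<le> 1" using z(2) a unfolding polar_def by auto
        moreover have "inner a y \<le> norm a * t"
          using norm_cauchy_schwarz[of a y] z(3)
          by (meson mult_left_mono norm_ge_zero order_trans)
        ultimately have "inner a z \<le> 1 + t * norm a" using z(1)
          by (simp add: inner_add_right algebra_simps)
        hence v: "inner a z / (1 + t * norm a) \<le> 1" using pos by simp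
        have "inner z w = s * (inner a z / (1 + t * norm a))"
          unfolding ws' by (simp add: inner_commute)
        also have "\<dots> \<le> 1"
        proof (cases "inner a z / (1 + t * norm a) \<le> 0")
          case True then show ?thesis using s by (smt (verit) mult_nonneg_nonpos)
        next
          case False then show ?thesis using s v
            by (smt (verit) mult_left_le_one_le)
        qed
        finally show ?thesis .
      qed
    qed
  qed
  have "convex hull ((\<Union>a\<in>A. closed_segment 0 ((1 / (1 + t * norm a)) *\<^sub>R a)) \<union> cball 0 t) \<subseteq> ?P"
    using gen polar_convex by (rule hull_minimal)
  thus ?thesis unfolding kappa_def using polar_closed by (rule closure_minimal)
qed

end
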